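(* Let $\Phi=(V,C)$ be a $k$-uniform CNF formula with $n=|V|$ variables in which each variable belongs to at most $d$ clauses, and let $Z$ be its number of satisfying assignments. For $\theta\ge0$ let $Z(\theta)=\sum_{X\in\{0,1\}^V}\exp(-\theta|F(X)|)$, where $F(X)\subseteq C$ is the set of clauses not satisfied by $X$. Given $\varepsilon>0$, let $\ell=nd\left\lceil\ln\frac{4nd}{\varepsilon}\right\rceil$ and $\theta_\ell=\frac{\ell}{dn}$. If $2^k\ge 2\mathrm{e}dk$, then $$Z\le Z(\theta_\ell)\le\exp\left(\frac\varepsilon2\right)Z.$$
   Context: A CNF formula is $k$-uniform if every clause contains exactly $k$ literals on distinct variables (never both $x$ and $\neg x$). *)

theory Defs
  imports Complex_Main "HOL-Library.FuncSet"
begin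

text \<open>A CNF formula: variable set V, clause index set C (allowing repeated clauses),
 and for each clause index c its set of literals lits c, a literal being (variable, sign);
 literal (v,True) is x_v, (v,False) is the negation of x_v.\<close>

definition clause_vars :: "('v \<times> bool) set \<Rightarrow> 'v set" where
  "clause_vars L = fst ` L"

definition k_uniform_cnf :: "nat \<Rightarrow> 'v set \<Rightarrow> 'c set \<Rightarrow> ('c \<Rightarrow> ('v \<times> bool) set) \<Rightarrow> bool" where
  "k_uniform_cnf k V C lits \<longleftrightarrow> finite V \<and> finite C \<and>
     (\<forall>c\<in>C. clause_vars (lits c) \<subseteq> V \<and> finite (lits c) \<and> card (lits c) = k
              \<and> card (clause_vars (lits c)) = k)"

definition max_var_degree :: "'v set \<Rightarrow> 'c set \<Rightarrow> ('c \<Rightarrow> ('v \<times> bool) set) \<Rightarrow> nat \<Rightarrow> bool" where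
  "max_var_degree V C lits d \<longleftrightarrow> (\<forall>v\<in>V. card {c\<in>C. v \<in> clause_vars (lits c)} \<le> d)"

definition assignments :: "'v set \<Rightarrow> ('v \<Rightarrow> bool) set" where
  "assignments V = PiE V (\<lambda>_. UNIV)"

definition clause_sat :: "('v \<Rightarrow> bool) \<Rightarrow> ('v \<times> bool) set \<Rightarrow> bool" where
  "clause_sat X L \<longleftrightarrow> (\<exists>(v,b)\<in>L. X v = b)"

definition unsat_clauses :: "'c set \<Rightarrow> ('c \<Rightarrow> ('v \<times> bool) set) \<Rightarrow> ('v \<Rightarrow> bool) \<Rightarrow> 'c set" where
  "unsat_clauses C lits X = {c\<in>C. \<not> clause_sat X (lits c)}"

definition num_sat :: "'v set \<Rightarrow> 'c set \<Rightarrow> ('c \<Rightarrow> ('v \<times> bool) set) \<Rightarrow> nat" where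
  "num_sat V C lits = card {X\<in>assignments V. unsat_clauses C lits X = {}}"

definition Z_theta :: "'v set \<Rightarrow> 'c set \<Rightarrow> ('c \<Rightarrow> ('v \<times> bool) set) \<Rightarrow> real \<Rightarrow> real" where
  "Z_theta V C lits \<theta> = (\<Sum>X\<in>assignments V. exp (- \<theta> * real (card (unsat_clauses C lits X))))"

end

theory Submission
  imports Defs
begin

lemma fiber_le:
  fixes V W :: "'a set" and Q :: "('a \<Rightarrow> bool) \<Rightarrow> bool" and p p' :: "'a \<Rightarrow> bool"
  assumes W: "W \<subseteq> V"
    and HQ: "\<And>X Y. X \<in> PiE V (\<lambda>_. UNIV) \<Longrightarrow> Y \<in> PiE V (\<lambda>_. UNIV) \<Longrightarrow> (\<forall>v\<in>V-W. X v = Y v) \<Longrightarrow> Q X = Q Y"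
    and p: "p \<in> PiE W (\<lambda>_. UNIV)" and p': "p' \<in> PiE W (\<lambda>_. UNIV)"
    and fin: "finite V"
  shows "card {X \<in> PiE V (\<lambda>_. UNIV). Q X \<and> restrict X W = p}
       \<le> card {X \<in> PiE V (\<lambda>_. UNIV). Q X \<and> restrict X W = p'}"
proof -
  define g where "g X = (\<lambda>v. if v \<in> W then p' v else X v)" for X :: "'a \<Rightarrow> bool"
  have fin2: "finite {X \<in> PiE V (\<lambda>_. UNIV). Q X \<and> restrict X W = p'}"
    using fin by (simp add: finite_PiE)
  have gin: "g X \<in> {X \<in> PiE V (\<lambda>_. UNIV). Q X \<and> restrict X W = p'}"
    if X: "X \<in> {X \<in> PiE V (\<lambda>_. UNIV). Q X \<and> restrict X W = p}" for X
  proof -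
    have XV: "X \<in> PiE V (\<lambda>_. UNIV)" using X by simp
    have gV: "g X \<in> PiE V (\<lambda>_. UNIV)"
      using XV W p' unfolding g_def by (auto simp: PiE_iff extensional_def)
    have "Q (g X) = Q X" using HQ[OF gV XV] by (auto simp: g_def)
    moreover have "restrict (g X) W = p'" using p' unfolding g_def
      by (auto simp: restrict_def PiE_iff extensional_def)
    ultimately show ?thesis using gV X by simp
  qed
  have inj: "inj_on g {X \<in> PiE V (\<lambda>_. UNIV). Q X \<and> restrict X W = p}"
  proof (rule inj_onI)
    fix X Y assume X: "X \<in> {X \<in> PiE V (\<lambda>_. UNIV). Q X \<and> restrict X W = p}"
      and Y: "Y \<in> {X \<in> PiE V (\<lambda>_. UNIV). Q X \<and> restrict X W = p}" and e: "g X = g Y"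
    show "X = Y"
    proof
      fix v
      show "X v = Y v"
      proof (cases "v \<in> W")
        case True
        then have "restrict X W v = restrict Y W v" using X Y by simp
        then show ?thesis using True by simp
      next
        case False
        then show ?thesis using fun_cong[OF e, of v] by (simp add: g_def)
      qed
    qed
  qed
  show ?thesis
    by (rule card_inj_on_le[OF inj _ fin2]) (use gin in blast)
qed

lemma fiber_eq:
  fixes V W :: "'a set" and Q :: "('a \<Rightarrow> bool) \<Rightarrow> bool" and p :: "'a \<Rightarrow> bool"
  assumes W: "W \<subseteq> V"
    and HQ: "\<And>X Y. X \<in> PiE V (\<lambda>_. UNIV) \<Longrightarrow> Y \<in> PiE V (\<lambda>_. UNIV) \<Longrightarrow> (\<forall>v\<in>V-W. X v = Y v) \<Longrightarrow> Q X = Q Y"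
    and p: "p \<in> PiE W (\<lambda>_. UNIV)"
    and fin: "finite V"
  shows "card {X \<in> PiE V (\<lambda>_. UNIV). Q X \<and> restrict X W = p} * 2 ^ card W
       = card {X \<in> PiE V (\<lambda>_. UNIV). Q X}"
proof -
  define cls where "cls p' = {X \<in> PiE V (\<lambda>_. UNIV). Q X \<and> restrict X W = p'}" for p'
  have finW: "finite W" using W fin finite_subset by blast
  have eq: "card (cls p') = card (cls p)" if "p' \<in> PiE W (\<lambda>_. UNIV)" for p'
    unfolding cls_def using fiber_le[where Q=Q, OF W HQ p that fin] fiber_le[where Q=Q, OF W HQ that p fin]
    by linarith
  have U: "{X \<in> PiE V (\<lambda>_. UNIV). Q X} = (\<Union>p'\<in>PiE W (\<lambda>_. UNIV). cls p')"
  proof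
    show "{X \<in> PiE V (\<lambda>_. UNIV). Q X} \<subseteq> (\<Union>p'\<in>PiE W (\<lambda>_. UNIV). cls p')"
    proof
      fix X assume X: "X \<in> {X \<in> PiE V (\<lambda>_. UNIV). Q X}"
      have "restrict X W \<in> PiE W (\<lambda>_. UNIV)" by simp
      moreover have "X \<in> cls (restrict X W)" using X by (simp add: cls_def)
      ultimately show "X \<in> (\<Union>p'\<in>PiE W (\<lambda>_. UNIV). cls p')" by blast
    qed
  qed (auto simp: cls_def)
  have "card {X \<in> PiE V (\<lambda>_. UNIV). Q X} = (\<Sum>p'\<in>PiE W (\<lambda>_. UNIV). card (cls p'))"
    unfolding U
    by (rule card_UN_disjoint) (auto simp: cls_def finW fin finite_PiE)
  also have "\<dots> = (\<Sum>p'\<in>PiE W (\<lambda>_. UNIV :: bool set). card (cls p))"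
    using eq by (intro sum.cong) auto
  also have "\<dots> = card (cls p) * 2 ^ card W"
    using finW by (simp add: card_PiE)
  finally show ?thesis by (simp add: cls_def)
qed


definition satT :: "('c \<Rightarrow> ('v \<times> bool) set) \<Rightarrow> 'c set \<Rightarrow> ('v \<Rightarrow> bool) \<Rightarrow> bool" where
  "satT lits T X \<longleftrightarrow> (\<forall>c\<in>T. clause_sat X (lits c))"

definition NN :: "'v set \<Rightarrow> (('v \<Rightarrow> bool) \<Rightarrow> bool) \<Rightarrow> real" where
  "NN V P = real (card {X \<in> assignments V. P X})"

lemma fin_asg: "finite V \<Longrightarrow> finite (assignments V)"
  by (simp add: assignments_def finite_PiE)

lemma NN_nonneg: "0 \<le> NN V P" by (simp add: NN_def)

lemma NN_split:
  assumes "finite V"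
  shows "NN V P = NN V (\<lambda>X. P X \<and> R X) + NN V (\<lambda>X. P X \<and> \<not> R X)"
proof -
  have "{X \<in> assignments V. P X} = {X \<in> assignments V. P X \<and> R X} \<union> {X \<in> assignments V. P X \<and> \<not> R X}"
    by auto
  moreover have "card ({X \<in> assignments V. P X \<and> R X} \<union> {X \<in> assignments V. P X \<and> \<not> R X})
     = card {X \<in> assignments V. P X \<and> R X} + card {X \<in> assignments V. P X \<and> \<not> R X}"
    by (rule card_Un_disjoint) (use fin_asg[OF assms] in auto)
  ultimately show ?thesis by (simp add: NN_def)
qed

lemma NN_mono:
  assumes "finite V" "\<And>X. X \<in> assignments V \<Longrightarrow> P X \<Longrightarrow> R X"
  shows "NN V P \<le> NN V R"
proof -
  have "card {X \<in> assignments V. P X} \<le> card {X \<in> assignments V. R X}"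
    by (rule card_mono) (use fin_asg[OF assms(1)] assms(2) in auto)
  then show ?thesis by (simp add: NN_def)
qed

lemma prod_lemma:
  fixes x :: real
  assumes fV: "finite V" and fU: "finite U" and disj: "T \<inter> U = {}" and x0: "0 \<le> x" and x1: "x \<le> 1"
    and H: "\<And>W c. W \<subseteq> T \<union> U \<Longrightarrow> c \<in> U \<Longrightarrow> c \<notin> W \<Longrightarrow>
       NN V (\<lambda>X. \<not> clause_sat X (lits c) \<and> satT lits W X) \<le> x * NN V (satT lits W)"
  shows "(1 - x) ^ card U * NN V (satT lits T) \<le> NN V (satT lits (T \<union> U))"
  using fU disj H
proof (induction U rule: finite_induct)
  case empty
  then show ?case by simp
next
  case (insert u U)
  have IH: "(1 - x) ^ card U * NN V (satT lits T) \<le> NN V (satT lits (T \<union> U))"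
    using insert.prems by (intro insert.IH) auto
  have a: "NN V (satT lits (T \<union> U)) = NN V (satT lits (T \<union> insert u U))
      + NN V (\<lambda>X. \<not> clause_sat X (lits u) \<and> satT lits (T \<union> U) X)"
  proof -
    have "NN V (satT lits (T \<union> U)) = NN V (\<lambda>X. satT lits (T \<union> U) X \<and> clause_sat X (lits u))
      + NN V (\<lambda>X. satT lits (T \<union> U) X \<and> \<not> clause_sat X (lits u))"
      by (rule NN_split[OF fV])
    moreover have "(\<lambda>X. satT lits (T \<union> U) X \<and> clause_sat X (lits u)) = satT lits (T \<union> insert u U)"
      by (auto simp: satT_def)
    moreover have "(\<lambda>X. satT lits (T \<union> U) X \<and> \<not> clause_sat X (lits u)) =
        (\<lambda>X. \<not> clause_sat X (lits u) \<and> satT lits (T \<union> U) X)"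
      by auto
    ultimately show ?thesis by simp
  qed
  have b: "NN V (\<lambda>X. \<not> clause_sat X (lits u) \<and> satT lits (T \<union> U) X) \<le> x * NN V (satT lits (T \<union> U))"
    using insert.prems insert.hyps by (intro insert.prems(2)) auto
  have "(1 - x) ^ card (insert u U) * NN V (satT lits T) = (1 - x) * ((1 - x) ^ card U * NN V (satT lits T))"
    using insert.hyps by simp
  also have "\<dots> \<le> (1 - x) * NN V (satT lits (T \<union> U))"
    using IH x1 by (intro mult_left_mono) auto
  also have "\<dots> \<le> NN V (satT lits (T \<union> insert u U))"
    using a b by (simp add: algebra_simps)
  finally show ?case .
qed

lemma satT_local:
  assumes A: "\<forall>t\<in>T2. clause_vars (lits t) \<subseteq> V - W"
    and B: "\<forall>v\<in>V - W. X v = Y v"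
  shows "satT lits T2 X = satT lits T2 Y"
proof -
  have "clause_sat X (lits t) = clause_sat Y (lits t)" if t: "t \<in> T2" for t
  proof -
    have e: "X v = Y v" if "(v,b) \<in> lits t" for v b
    proof -
      have "v \<in> clause_vars (lits t)" unfolding clause_vars_def using that by force
      then have "v \<in> V - W" using A t by blast
      then show ?thesis using B by blast
    qed
    show ?thesis unfolding clause_sat_def
    proof
      assume "\<exists>(v, b)\<in>lits t. X v = b"
      then obtain v b where "(v,b) \<in> lits t" "X v = b" by blast
      then show "\<exists>(v, b)\<in>lits t. Y v = b" using e[of v b] by blast
    next
      assume "\<exists>(v, b)\<in>lits t. Y v = b"
      then obtain v b where "(v,b) \<in> lits t" "Y v = b" by blast
      then show "\<exists>(v, b)\<in>lits t. X v = b" using e[of v b] by auto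
    qed
  qed
  then show ?thesis unfolding satT_def by auto
qed


lemma deg_ge1:
  assumes kc: "k_uniform_cnf k V C lits" and k1: "k \<ge> 1" and md: "max_var_degree V C lits d"
    and c: "c \<in> C"
  shows "d \<ge> 1"
proof -
  have cw: "card (clause_vars (lits c)) = k" and sub: "clause_vars (lits c) \<subseteq> V"
    using kc c unfolding k_uniform_cnf_def by auto
  then obtain v where v: "v \<in> clause_vars (lits c)" using k1
    by (cases "clause_vars (lits c) = {}") auto
  have fC: "finite C" using kc unfolding k_uniform_cnf_def by auto
  have "c \<in> {c'\<in>C. v \<in> clause_vars (lits c')}" using c v by simp
  moreover have "finite {c'\<in>C. v \<in> clause_vars (lits c')}" using fC by simp
  ultimately have "0 < card {c'\<in>C. v \<in> clause_vars (lits c')}"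
    using card_gt_0_iff by blast
  then have "1 \<le> card {c'\<in>C. v \<in> clause_vars (lits c')}" by simp
  also have "\<dots> \<le> d" using md v sub unfolding max_var_degree_def by auto
  finally show ?thesis .
qed

lemma lll:
  assumes kc: "k_uniform_cnf k V C lits" and k1: "k \<ge> 1" and md: "max_var_degree V C lits d"
    and kd: "4 * real k * real d \<le> 2 ^ k"
  shows "T \<subseteq> C \<Longrightarrow> c \<in> C \<Longrightarrow> c \<notin> T \<Longrightarrow>
    NN V (\<lambda>X. \<not> clause_sat X (lits c) \<and> satT lits T X) \<le> (1 / (2 * real k * real d)) * NN V (satT lits T)"
proof (induction "card T" arbitrary: T c rule: less_induct)
  case less
  define x where "x = 1 / (2 * real k * real d)"
  define W where "W = clause_vars (lits c)"
  define T1 where "T1 = {t\<in>T. clause_vars (lits t) \<inter> W \<noteq> {}}"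
  define T2 where "T2 = T - T1"
  have fV: "finite V" and fC: "finite C" using kc unfolding k_uniform_cnf_def by auto
  have fT: "finite T" using less.prems fC finite_subset by blast
  have d1: "d \<ge> 1" using deg_ge1[OF kc k1 md less.prems(2)] .
  have kdr: "1 \<le> real k * real d" using d1 k1
  proof -
    have "1 * 1 \<le> real k * real d" using d1 k1 by (intro mult_mono) auto
    then show ?thesis by simp
  qed
  have x0: "0 < x" using d1 k1 by (simp add: x_def)
  have p2: "0 < 2 * real k * real d" using kdr by linarith
  have x1: "x \<le> 1" using p2 kdr by (simp add: x_def divide_le_eq)
  have cW: "card W = k" and WV: "W \<subseteq> V"
    using kc less.prems(2) unfolding k_uniform_cnf_def W_def by auto
  have fW: "finite W" using WV fV finite_subset by blast
  have T1card: "card T1 \<le> k * d"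
  proof -
    have "T1 \<subseteq> (\<Union>v\<in>W. {c'\<in>C. v \<in> clause_vars (lits c')})"
      using less.prems(1) unfolding T1_def by auto
    then have "card T1 \<le> card (\<Union>v\<in>W. {c'\<in>C. v \<in> clause_vars (lits c')})"
      by (intro card_mono) (rule finite_subset[OF _ fC], auto)
    also have "\<dots> \<le> (\<Sum>v\<in>W. card {c'\<in>C. v \<in> clause_vars (lits c')})"
      by (rule card_UN_le[OF fW])
    also have "\<dots> \<le> (\<Sum>v\<in>W. d)"
      using md WV unfolding max_var_degree_def by (intro sum_mono) auto
    also have "\<dots> = k * d" using cW by simp
    finally show ?thesis .
  qed
  define A where "A = (\<lambda>X. \<not> clause_sat X (lits c))"
  have stepa: "NN V (\<lambda>X. A X \<and> satT lits T X) \<le> NN V (\<lambda>X. A X \<and> satT lits T2 X)"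
    by (rule NN_mono[OF fV]) (auto simp: satT_def T2_def)
  have loc: "\<forall>t\<in>T2. clause_vars (lits t) \<subseteq> V - W"
    using kc less.prems(1) unfolding T2_def T1_def k_uniform_cnf_def by auto
  have stepb: "NN V (\<lambda>X. A X \<and> satT lits T2 X) * 2 ^ k \<le> NN V (satT lits T2)"
  proof (cases "{X \<in> assignments V. A X \<and> satT lits T2 X} = {}")
    case True
    show ?thesis unfolding NN_def True by simp
  next
    case False
    then obtain X0 where X0: "X0 \<in> assignments V" "A X0" by blast
    define p where "p = restrict X0 W"
    have p: "p \<in> PiE W (\<lambda>_. UNIV)" by (simp add: p_def)
    have sub: "{X \<in> assignments V. A X \<and> satT lits T2 X} \<subseteq>
       {X \<in> PiE V (\<lambda>_. UNIV). satT lits T2 X \<and> restrict X W = p}"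
    proof
      fix X assume X: "X \<in> {X \<in> assignments V. A X \<and> satT lits T2 X}"
      have "X v = X0 v" if vW: "v \<in> W" for v
      proof -
        obtain b where vb: "(v,b) \<in> lits c" using vW unfolding W_def clause_vars_def by auto
        have "X v \<noteq> b" using X vb unfolding A_def clause_sat_def by auto
        moreover have "X0 v \<noteq> b" using X0 vb unfolding A_def clause_sat_def by auto
        ultimately show ?thesis by auto
      qed
      then have "restrict X W = p" unfolding p_def by (auto simp: restrict_def)
      then show "X \<in> {X \<in> PiE V (\<lambda>_. UNIV). satT lits T2 X \<and> restrict X W = p}"
        using X by (auto simp: assignments_def)
    qed
    have le: "card {X \<in> assignments V. A X \<and> satT lits T2 X} \<le>
       card {X \<in> PiE V (\<lambda>_. UNIV). satT lits T2 X \<and> restrict X W = p}"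
      by (rule card_mono[OF _ sub]) (simp add: fV finite_PiE)
    have eq: "card {X \<in> PiE V (\<lambda>_. UNIV). satT lits T2 X \<and> restrict X W = p} * 2 ^ card W
       = card {X \<in> PiE V (\<lambda>_. UNIV). satT lits T2 X}"
    proof (rule fiber_eq[where Q="satT lits T2", OF WV _ p fV])
      fix X Y :: "'a \<Rightarrow> bool" assume "\<forall>v\<in>V - W. X v = Y v"
      then show "satT lits T2 X = satT lits T2 Y" by (rule satT_local[OF loc])
    qed
    have "card {X \<in> assignments V. A X \<and> satT lits T2 X} * 2 ^ k \<le>
       card {X \<in> PiE V (\<lambda>_. UNIV). satT lits T2 X \<and> restrict X W = p} * 2 ^ k"
      by (rule mult_le_mono1[OF le])
    also have "\<dots> = card {X \<in> assignments V. satT lits T2 X}"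
      using eq cW by (simp add: assignments_def)
    finally have "card {X \<in> assignments V. A X \<and> satT lits T2 X} * 2 ^ k \<le>
       card {X \<in> assignments V. satT lits T2 X}" .
    then have "real (card {X \<in> assignments V. A X \<and> satT lits T2 X} * 2 ^ k) \<le>
       real (card {X \<in> assignments V. satT lits T2 X})" by linarith
    then show ?thesis by (simp add: NN_def)
  qed
  have T21: "T2 \<union> T1 = T" "T2 \<inter> T1 = {}" unfolding T2_def T1_def by auto
  have stepc: "(1 - x) ^ card T1 * NN V (satT lits T2) \<le> NN V (satT lits (T2 \<union> T1))"
  proof (rule prod_lemma[OF fV _ T21(2)])
    show "finite T1" using fT unfolding T1_def by simp
    show "0 \<le> x" "x \<le> 1" using x0 x1 by auto
    fix W' c' assume W': "W' \<subseteq> T2 \<union> T1" and c': "c' \<in> T1" and cW': "c' \<notin> W'"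
    have "W' \<subset> T" using W' c' cW' T21 unfolding T1_def by auto
    then have "card W' < card T" using fT by (simp add: psubset_card_mono)
    moreover have "W' \<subseteq> C" "c' \<in> C" using W' c' T21 less.prems(1) unfolding T1_def by auto
    ultimately have "NN V (\<lambda>X. \<not> clause_sat X (lits c') \<and> satT lits W' X) \<le> (1 / (2 * real k * real d)) * NN V (satT lits W')"
      using cW' by (intro less.hyps) auto
    then show "NN V (\<lambda>X. \<not> clause_sat X (lits c') \<and> satT lits W' X) \<le> x * NN V (satT lits W')"
      unfolding x_def .
  qed
  have stepd: "1 / 2 \<le> (1 - x) ^ card T1"
  proof -
    have "1 + real (card T1) * (- x) \<le> (1 + (- x)) ^ card T1"
      by (rule Bernoulli_inequality) (use x1 in auto)
    moreover have "real (card T1) * x \<le> 1 / 2"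
    proof -
      have "real (card T1) \<le> real k * real d" proof -
        have "real (card T1) \<le> real (k * d)" using T1card by (simp only: of_nat_le_iff)
        then show ?thesis by simp
      qed
      then have "real (card T1) * x \<le> real k * real d * x" using x0 by (intro mult_right_mono) auto
      also have "\<dots> = 1 / 2" using d1 k1 unfolding x_def by (simp add: field_simps)
      finally show ?thesis .
    qed
    ultimately show ?thesis by simp
  qed
  define a where "a = NN V (\<lambda>X. A X \<and> satT lits T X)"
  define b where "b = NN V (satT lits T2)"
  define s where "s = NN V (satT lits T)"
  have b0: "0 \<le> b" unfolding b_def by (rule NN_nonneg)
  have s0: "0 \<le> s" unfolding s_def by (rule NN_nonneg)
  have h1: "a * 2 ^ k \<le> b"
  proof -
    have "a * 2 ^ k \<le> NN V (\<lambda>X. A X \<and> satT lits T2 X) * 2 ^ k"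
      using stepa unfolding a_def by (intro mult_right_mono) auto
    then show ?thesis using stepb unfolding b_def by linarith
  qed
  have h2: "b / 2 \<le> s"
  proof -
    have "b / 2 = 1/2 * b" by simp
    also have "\<dots> \<le> (1 - x) ^ card T1 * b" using stepd b0 by (intro mult_right_mono) auto
    also have "\<dots> \<le> s" using stepc T21 unfolding b_def s_def by simp
    finally show ?thesis .
  qed
  have h3: "2 \<le> x * 2 ^ k" using kd d1 k1 unfolding x_def by (simp add: field_simps)
  have "a * 2 ^ k \<le> (x * s) * 2 ^ k"
  proof -
    have "a * 2 ^ k \<le> 2 * s" using h1 h2 by simp
    also have "\<dots> \<le> (x * 2 ^ k) * s" using h3 s0 by (intro mult_right_mono) auto
    finally show ?thesis by (simp add: algebra_simps)
  qed
  then have "a \<le> x * s" by simp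
  then show ?case unfolding a_def s_def A_def x_def .
qed


lemma sum_pow_card:
  fixes r :: real
  assumes "finite A"
  shows "(\<Sum>S\<in>Pow A. r ^ card S) = (1 + r) ^ card A"
  using assms
proof (induction A rule: finite_induct)
  case empty
  then show ?case by simp
next
  case (insert a A)
  have disj: "Pow A \<inter> insert a ` Pow A = {}" using insert.hyps by auto
  have inj: "inj_on (insert a) (Pow A)"
  proof (rule inj_onI)
    fix S1 S2 assume "S1 \<in> Pow A" "S2 \<in> Pow A" "insert a S1 = insert a S2"
    then show "S1 = S2" using insert.hyps(2) by (metis PowD in_mono insert_ident)
  qed
  have fP: "finite (Pow A)" using insert.hyps by simp
  have "(\<Sum>S\<in>Pow (insert a A). r ^ card S) = (\<Sum>S\<in>Pow A. r ^ card S) + (\<Sum>S\<in>insert a ` Pow A. r ^ card S)"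
    unfolding Pow_insert by (rule sum.union_disjoint) (use fP disj in auto)
  also have "(\<Sum>S\<in>insert a ` Pow A. r ^ card S) = (\<Sum>S\<in>Pow A. r ^ card (insert a S))"
    by (rule sum.reindex[OF inj, unfolded comp_def])
  also have "\<dots> = (\<Sum>S\<in>Pow A. r * r ^ card S)"
  proof (rule sum.cong)
    fix S assume "S \<in> Pow A"
    then have "finite S" "a \<notin> S" using insert.hyps finite_subset by auto
    then show "r ^ card (insert a S) = r * r ^ card S" by simp
  qed simp
  also have "\<dots> = r * (\<Sum>S\<in>Pow A. r ^ card S)" by (simp add: sum_distrib_left)
  finally show ?case using insert by (simp add: algebra_simps)
qed

lemma card_C_le:
  assumes kc: "k_uniform_cnf k V C lits" and k1: "k \<ge> 1" and md: "max_var_degree V C lits d"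
  shows "card C \<le> card V * d"
proof -
  have fV: "finite V" and fC: "finite C" using kc unfolding k_uniform_cnf_def by auto
  define f where "f c = (SOME v. v \<in> clause_vars (lits c))" for c
  have fin: "f c \<in> clause_vars (lits c)" "f c \<in> V" if "c \<in> C" for c
  proof -
    have cw: "card (clause_vars (lits c)) = k" and sub: "clause_vars (lits c) \<subseteq> V"
      using kc that unfolding k_uniform_cnf_def by auto
    then have "clause_vars (lits c) \<noteq> {}" using k1 by auto
    then show "f c \<in> clause_vars (lits c)" unfolding f_def by (simp add: some_in_eq)
    then show "f c \<in> V" using sub by auto
  qed
  have "card C \<le> card (SIGMA v:V. {c\<in>C. v \<in> clause_vars (lits c)})"
  proof (rule card_inj_on_le[where f="\<lambda>c. (f c, c)"])
    show "inj_on (\<lambda>c. (f c, c)) C" by (auto simp: inj_on_def)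
    show "(\<lambda>c. (f c, c)) ` C \<subseteq> (SIGMA v:V. {c \<in> C. v \<in> clause_vars (lits c)})"
      using fin by auto
    show "finite (SIGMA v:V. {c \<in> C. v \<in> clause_vars (lits c)})" using fV fC by auto
  qed
  also have "\<dots> = (\<Sum>v\<in>V. card {c\<in>C. v \<in> clause_vars (lits c)})" using fV fC by simp
  also have "\<dots> \<le> (\<Sum>v\<in>V. d)" using md unfolding max_var_degree_def by (intro sum_mono) auto
  also have "\<dots> = card V * d" by simp
  finally show ?thesis .
qed


theorem lemma7p2:
  fixes V :: "'v set" and C :: "'c set" and lits :: "'c \<Rightarrow> ('v \<times> bool) set"
    and k d :: nat and \<epsilon> :: real
  assumes "k_uniform_cnf k V C lits"
    and "k \<ge> 1"
    and "max_var_degree V C lits d"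
    and "\<epsilon> > 0"
    and "2 ^ k \<ge> 2 * exp 1 * real d * real k"
  defines "n \<equiv> card V"
  defines "ell \<equiv> real n * real d * of_int \<lceil>ln (4 * real n * real d / \<epsilon>)\<rceil>"
  defines "\<theta> \<equiv> ell / (real d * real n)"
  shows "real (num_sat V C lits) \<le> Z_theta V C lits \<theta>
       \<and> Z_theta V C lits \<theta> \<le> exp (\<epsilon> / 2) * real (num_sat V C lits)"
proof -
  note kc = assms(1) and k1 = assms(2) and md = assms(3) and eps = assms(4) and kexp = assms(5)
  have fV: "finite V" and fC: "finite C" using kc unfolding k_uniform_cnf_def by auto
  have fA: "finite (assignments V)" using fV by (rule fin_asg)
  define F where "F X = unsat_clauses C lits X" for X
  have Zeq: "real (num_sat V C lits) = NN V (satT lits C)"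
  proof -
    have "{X \<in> assignments V. unsat_clauses C lits X = {}} = {X \<in> assignments V. satT lits C X}"
      by (auto simp: unsat_clauses_def satT_def)
    then show ?thesis by (simp add: num_sat_def NN_def)
  qed
  have lower: "real (num_sat V C lits) \<le> Z_theta V C lits \<theta>"
  proof -
    have "real (num_sat V C lits) = (\<Sum>X\<in>{X \<in> assignments V. unsat_clauses C lits X = {}}.
        exp (- \<theta> * real (card (unsat_clauses C lits X))))"
      by (simp add: num_sat_def)
    also have "\<dots> \<le> Z_theta V C lits \<theta>"
      unfolding Z_theta_def by (rule sum_mono2[OF fA]) auto
    finally show ?thesis .
  qed
  show ?thesis
  proof (cases "C = {}")
    case True
    have "Z_theta V C lits \<theta> = real (num_sat V C lits)"
      using True by (simp add: Z_theta_def num_sat_def unsat_clauses_def)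
    moreover have "real (num_sat V C lits) \<le> exp (\<epsilon> / 2) * real (num_sat V C lits)"
    proof -
      have "1 \<le> exp (\<epsilon> / 2)" using eps by simp
      then show ?thesis by (simp add: mult_le_cancel_right1)
    qed
    ultimately show ?thesis by simp
  next
    case False
    then obtain c0 where c0: "c0 \<in> C" by blast
    have d1: "d \<ge> 1" using deg_ge1[OF kc k1 md c0] .
    have "clause_vars (lits c0) \<subseteq> V" "card (clause_vars (lits c0)) = k"
      using kc c0 unfolding k_uniform_cnf_def by auto
    then have "V \<noteq> {}" using k1 by auto
    then have n1: "n \<ge> 1" using fV unfolding n_def by (simp add: Suc_leI card_gt_0_iff)
    define L where "L = ln (4 * real n * real d / \<epsilon>)"
    have th: "\<theta> = of_int \<lceil>L\<rceil>" unfolding \<theta>_def ell_def L_def using n1 d1 by simp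
    define q where "q = exp (- \<theta>)"
    have q0: "0 \<le> q" unfolding q_def by simp
    have qle: "q \<le> \<epsilon> / (4 * real n * real d)"
    proof -
      have pos: "0 < 4 * real n * real d / \<epsilon>" using n1 d1 eps by simp
      have "q \<le> exp (- L)" unfolding q_def th by simp
      also have "exp (- L) = inverse (4 * real n * real d / \<epsilon>)"
        unfolding L_def using pos by (simp add: exp_minus)
      also have "\<dots> = \<epsilon> / (4 * real n * real d)" by simp
      finally show ?thesis .
    qed
    have kd: "4 * real k * real d \<le> 2 ^ k"
    proof -
      have "2 \<le> exp (1::real)" using exp_ge_add_one_self[of 1] by simp
      then have "2 * (real d * real k) \<le> exp 1 * (real d * real k)"
        by (intro mult_right_mono) auto
      then have "4 * real k * real d \<le> 2 * exp 1 * real d * real k"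
        by (simp add: algebra_simps)
      then show ?thesis using kexp by linarith
    qed
    define x where "x = 1 / (2 * real k * real d)"
    have kdr: "1 \<le> real k * real d"
    proof -
      have "1 * 1 \<le> real k * real d" using d1 k1 by (intro mult_mono) auto
      then show ?thesis by simp
    qed
    have x0: "0 \<le> x" unfolding x_def by simp
    have xh: "x \<le> 1 / 2" using kdr unfolding x_def by (simp add: field_simps)
    have LLL: "NN V (\<lambda>X. \<not> clause_sat X (lits c) \<and> satT lits W X) \<le> x * NN V (satT lits W)"
      if "W \<subseteq> C" "c \<in> C" "c \<notin> W" for W c
      unfolding x_def by (rule lll[OF kc k1 md kd that])
    define Z where "Z = NN V (satT lits C)"
    have fiberS: "NN V (\<lambda>X. F X = S) \<le> 2 ^ card S * Z" if S: "S \<subseteq> C" for S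
    proof -
      have a: "NN V (\<lambda>X. F X = S) \<le> NN V (satT lits (C - S))"
        by (rule NN_mono[OF fV]) (auto simp: F_def unsat_clauses_def satT_def)
      have fS: "finite S" using S fC finite_subset by blast
      have b: "(1 - x) ^ card S * NN V (satT lits (C - S)) \<le> NN V (satT lits ((C - S) \<union> S))"
        by (rule prod_lemma[OF fV fS _ x0]) (use xh S in \<open>auto intro: LLL\<close>)
      have cS: "(C - S) \<union> S = C" using S by auto
      have "(1/2) ^ card S * NN V (\<lambda>X. F X = S) \<le> (1 - x) ^ card S * NN V (satT lits (C - S))"
        using a xh by (intro mult_mono power_mono) (auto simp: NN_nonneg)
      also have "\<dots> \<le> Z" using b cS unfolding Z_def by simp
      finally have "(1/2) ^ card S * NN V (\<lambda>X. F X = S) \<le> Z" .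
      then show ?thesis by (simp add: field_simps power_divide)
    qed
    have Zt: "Z_theta V C lits \<theta> = (\<Sum>X\<in>assignments V. q ^ card (F X))"
      unfolding Z_theta_def F_def q_def
      by (rule sum.cong) (auto simp: exp_of_nat_mult[symmetric] mult.commute)
    also have "\<dots> = (\<Sum>S\<in>Pow C. \<Sum>X\<in>{X \<in> assignments V. F X = S}. q ^ card (F X))"
      by (rule sum.group[symmetric, OF fA]) (auto simp: F_def unsat_clauses_def fC)
    also have "\<dots> = (\<Sum>S\<in>Pow C. q ^ card S * NN V (\<lambda>X. F X = S))"
      by (rule sum.cong) (auto simp: NN_def)
    also have "\<dots> \<le> (\<Sum>S\<in>Pow C. q ^ card S * (2 ^ card S * Z))"
      by (rule sum_mono) (use fiberS q0 in \<open>auto intro: mult_left_mono\<close>)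
    also have "\<dots> = (\<Sum>S\<in>Pow C. (2 * q) ^ card S) * Z"
      by (simp add: sum_distrib_right sum_distrib_left power_mult_distrib algebra_simps)
    also have "\<dots> = (1 + 2 * q) ^ card C * Z"
      using sum_pow_card[OF fC, of "2 * q"] by simp
    also have "\<dots> \<le> exp (\<epsilon> / 2) * Z"
    proof (rule mult_right_mono)
      show "0 \<le> Z" unfolding Z_def by (rule NN_nonneg)
      have "(1 + 2 * q) ^ card C \<le> exp (2 * q) ^ card C"
        using q0 by (intro power_mono) (auto simp: exp_ge_add_one_self)
      also have "\<dots> = exp (real (card C) * (2 * q))" by (simp add: exp_of_nat_mult)
      also have "\<dots> \<le> exp (\<epsilon> / 2)"
      proof -
        have m: "real (card C) \<le> real n * real d"
          using card_C_le[OF kc k1 md] unfolding n_def by (metis of_nat_le_iff of_nat_mult)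
        have "real (card C) * (2 * q) \<le> real n * real d * (2 * q)"
          using m q0 by (intro mult_right_mono) auto
        also have "\<dots> \<le> real n * real d * (2 * (\<epsilon> / (4 * real n * real d)))"
          using qle n1 d1 by (intro mult_left_mono) auto
        also have "\<dots> = \<epsilon> / 2" using n1 d1 by (simp add: field_simps)
        finally show ?thesis by simp
      qed
      finally show "(1 + 2 * q) ^ card C \<le> exp (\<epsilon> / 2)" .
    qed
    finally show ?thesis using lower Zeq unfolding Z_def by simp
  qed
qed

end
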